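(* Let $X$ be a nonempty set and $d$ a triangular symmetric on $X$ such that $(X,d)$ is 0-complete. Let $T:X\to X$ be $d$-asymptotic, i.e. $\lim_n d(T^nx,T^{n+1}x)=0$ for all $x\in X$. Let $G\in\{M_1,M_2,M_3\}$ and suppose $T$ is $(d,G;\varphi)$-contractive, i.e. $d(Tx,Ty)\le\varphi(G(x,y))$ for all $x,y\in X$, for some nearly right admissible normal function $\varphi:[0,\infty)\to[0,\infty)$. Then $T$ is a global Picard operator (modulo $d$).
   Context: A symmetric on $X$ is a map $d:X\times X\to[0,\infty)$ with $d(x,y)=d(y,x)$; it is triangular if $d(x,z)\le d(x,y)+d(y,z)$ for all $x,y,z$. A sequence $(x_n)$ $0d$-converges to $x$ if $d(x_n,x)\to0$; it is $0d$-convergent if such $x$ exists. It is $0d$-Cauchy if for every $\varepsilon>0$ there is $j$ with $d(x_m,x_n)<\varepsilon$ whenever $j\le m<n$. $(X,d)$ is 0-complete if every $0d$-Cauchy sequence is $0d$-convergent. A subset $Y\neq\emptyset$ is $d$-singleton if $d(y_1,y_2)=0$ for all $y_1,y_2\in Y$. A point $z$ is $d$-fixed if $d(z,Tz)=0$; $\mathrm{Fix}(T;d)$ is the set of such points. $x$ is a Picard point (modulo $(d,T)$) if $(T^nx)$ is $0d$-convergent and every point to which it $0d$-converges lies in $\mathrm{Fix}(T;d)$. $T$ is a Picard operator (modulo $d$) if every $x\in X$ is a Picard point, and a global Picard operator (modulo $d$) if moreover $\mathrm{Fix}(T;d)$ is $d$-singleton. Notation: $M_1(x,y)=d(x,y)$,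 $H(x,y)=\max\{d(x,Tx),d(y,Ty)\}$, $L(x,y)=\frac12[d(x,Ty)+d(Tx,y)]$, $M_2=\max\{M_1,H\}$, $M_3=\max\{M_1,H,L\}$. A function $\varphi:[0,\infty)\to[0,\infty)$ is normal if $\varphi(0)=0$ and $\varphi(t)<t$ for $t>0$. For $s>0$, $L_+\varphi(s)=\max\{\limsup_{t\to s+}\varphi(t),\varphi(s)\}$. A normal $\varphi$ is nearly right admissible if there is a countable $Q\subseteq(0,\infty)$ with $L_+\varphi(s)<s$ (equivalently $\limsup_{t\to s+}\varphi(t)<s$) for all $s\in(0,\infty)\setminus Q$. *)

theory Defs
  imports "HOL-Analysis.Analysis"
begin

text \<open>The underlying nonempty set X is modelled as a type 'a (types are nonempty).\<close>

definition symmetric_on :: "('a \<Rightarrow> 'a \<Rightarrow> real) \<Rightarrow> bool" where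
  "symmetric_on d \<longleftrightarrow> (\<forall>x y. 0 \<le> d x y) \<and> (\<forall>x y. d x y = d y x)"

definition triangular :: "('a \<Rightarrow> 'a \<Rightarrow> real) \<Rightarrow> bool" where
  "triangular d \<longleftrightarrow> (\<forall>x y z. d x z \<le> d x y + d y z)"

definition zd_converges :: "('a \<Rightarrow> 'a \<Rightarrow> real) \<Rightarrow> (nat \<Rightarrow> 'a) \<Rightarrow> 'a \<Rightarrow> bool" where
  "zd_converges d xs x \<longleftrightarrow> (\<lambda>n. d (xs n) x) \<longlonglongrightarrow> 0"

definition zd_convergent :: "('a \<Rightarrow> 'a \<Rightarrow> real) \<Rightarrow> (nat \<Rightarrow> 'a) \<Rightarrow> bool" where
  "zd_convergent d xs \<longleftrightarrow> (\<exists>x. zd_converges d xs x)"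

definition zd_Cauchy :: "('a \<Rightarrow> 'a \<Rightarrow> real) \<Rightarrow> (nat \<Rightarrow> 'a) \<Rightarrow> bool" where
  "zd_Cauchy d xs \<longleftrightarrow> (\<forall>e>0. \<exists>j. \<forall>m n. j \<le> m \<and> m < n \<longrightarrow> d (xs m) (xs n) < e)"

definition zero_complete :: "('a \<Rightarrow> 'a \<Rightarrow> real) \<Rightarrow> bool" where
  "zero_complete d \<longleftrightarrow> (\<forall>xs. zd_Cauchy d xs \<longrightarrow> zd_convergent d xs)"

definition d_singleton :: "('a \<Rightarrow> 'a \<Rightarrow> real) \<Rightarrow> 'a set \<Rightarrow> bool" where
  "d_singleton d Y \<longleftrightarrow> Y \<noteq> {} \<and> (\<forall>y1\<in>Y. \<forall>y2\<in>Y. d y1 y2 = 0)"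

definition Fix_d :: "('a \<Rightarrow> 'a) \<Rightarrow> ('a \<Rightarrow> 'a \<Rightarrow> real) \<Rightarrow> 'a set" where
  "Fix_d T d = {z. d z (T z) = 0}"

definition picard_point :: "('a \<Rightarrow> 'a \<Rightarrow> real) \<Rightarrow> ('a \<Rightarrow> 'a) \<Rightarrow> 'a \<Rightarrow> bool" where
  "picard_point d T x \<longleftrightarrow>
     zd_convergent d (\<lambda>n. (T ^^ n) x) \<and>
     (\<forall>z. zd_converges d (\<lambda>n. (T ^^ n) x) z \<longrightarrow> z \<in> Fix_d T d)"

definition picard_operator :: "('a \<Rightarrow> 'a \<Rightarrow> real) \<Rightarrow> ('a \<Rightarrow> 'a) \<Rightarrow> bool" where
  "picard_operator d T \<longleftrightarrow> (\<forall>x. picard_point d T x)"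

definition global_picard_operator :: "('a \<Rightarrow> 'a \<Rightarrow> real) \<Rightarrow> ('a \<Rightarrow> 'a) \<Rightarrow> bool" where
  "global_picard_operator d T \<longleftrightarrow> picard_operator d T \<and> d_singleton d (Fix_d T d)"

definition d_asymptotic :: "('a \<Rightarrow> 'a \<Rightarrow> real) \<Rightarrow> ('a \<Rightarrow> 'a) \<Rightarrow> bool" where
  "d_asymptotic d T \<longleftrightarrow> (\<forall>x. (\<lambda>n. d ((T ^^ n) x) ((T ^^ Suc n) x)) \<longlonglongrightarrow> 0)"

definition M1 :: "('a \<Rightarrow> 'a \<Rightarrow> real) \<Rightarrow> 'a \<Rightarrow> 'a \<Rightarrow> real" where
  "M1 d x y = d x y"

definition H :: "('a \<Rightarrow> 'a \<Rightarrow> real) \<Rightarrow> ('a \<Rightarrow> 'a) \<Rightarrow> 'a \<Rightarrow> 'a \<Rightarrow> real" where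
  "H d T x y = max (d x (T x)) (d y (T y))"

definition L :: "('a \<Rightarrow> 'a \<Rightarrow> real) \<Rightarrow> ('a \<Rightarrow> 'a) \<Rightarrow> 'a \<Rightarrow> 'a \<Rightarrow> real" where
  "L d T x y = (d x (T y) + d (T x) y) / 2"

definition M2 :: "('a \<Rightarrow> 'a \<Rightarrow> real) \<Rightarrow> ('a \<Rightarrow> 'a) \<Rightarrow> 'a \<Rightarrow> 'a \<Rightarrow> real" where
  "M2 d T x y = max (M1 d x y) (H d T x y)"

definition M3 :: "('a \<Rightarrow> 'a \<Rightarrow> real) \<Rightarrow> ('a \<Rightarrow> 'a) \<Rightarrow> 'a \<Rightarrow> 'a \<Rightarrow> real" where
  "M3 d T x y = max (max (M1 d x y) (H d T x y)) (L d T x y)"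

text \<open>phi : [0,oo) -> [0,oo), represented as a real function; only values on [0,oo) matter.\<close>
definition normal_fun :: "(real \<Rightarrow> real) \<Rightarrow> bool" where
  "normal_fun \<phi> \<longleftrightarrow> (\<forall>t\<ge>0. 0 \<le> \<phi> t) \<and> \<phi> 0 = 0 \<and> (\<forall>t>0. \<phi> t < t)"

definition L_plus :: "(real \<Rightarrow> real) \<Rightarrow> real \<Rightarrow> ereal" where
  "L_plus \<phi> s = max (Limsup (at_right s) (\<lambda>t. ereal (\<phi> t))) (ereal (\<phi> s))"

definition nearly_right_admissible :: "(real \<Rightarrow> real) \<Rightarrow> bool" where
  "nearly_right_admissible \<phi> \<longleftrightarrow> normal_fun \<phi> \<and>
     (\<exists>Q. countable Q \<and> Q \<subseteq> {0<..} \<and> (\<forall>s\<in>{0<..} - Q. L_plus \<phi> s < ereal s))"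

definition contractive :: "('a \<Rightarrow> 'a \<Rightarrow> real) \<Rightarrow> ('a \<Rightarrow> 'a \<Rightarrow> real) \<Rightarrow> (real \<Rightarrow> real) \<Rightarrow> ('a \<Rightarrow> 'a) \<Rightarrow> bool" where
  "contractive d G \<phi> T \<longleftrightarrow> (\<forall>x y. d (T x) (T y) \<le> \<phi> (G x y))"

end

theory Submission
  imports Defs
begin

locale setting =
  fixes d :: "'a \<Rightarrow> 'a \<Rightarrow> real" and T :: "'a \<Rightarrow> 'a"
    and G :: "'a \<Rightarrow> 'a \<Rightarrow> real" and \<phi> :: "real \<Rightarrow> real"
  assumes sym: "symmetric_on d" and tri: "triangular d" and comp: "zero_complete d"
    and asy: "d_asymptotic d T"
    and GG: "G \<in> {M1 d, M2 d T, M3 d T}"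
    and nra: "nearly_right_admissible \<phi>"
    and con: "contractive d G \<phi> T"
begin

lemma d_nn: "0 \<le> d x y" using sym by (simp add: symmetric_on_def)
lemma d_sym: "d x y = d y x" using sym by (simp add: symmetric_on_def)
lemma d_tri: "d x z \<le> d x y + d y z" using tri by (simp add: triangular_def)
lemma phi_nn: "t \<ge> 0 \<Longrightarrow> 0 \<le> \<phi> t" using nra by (simp add: nearly_right_admissible_def normal_fun_def)
lemma phi_lt: "t > 0 \<Longrightarrow> \<phi> t < t" using nra by (simp add: nearly_right_admissible_def normal_fun_def)
lemma phi0: "\<phi> 0 = 0" using nra by (simp add: nearly_right_admissible_def normal_fun_def)
lemma phi_le: "t \<ge> 0 \<Longrightarrow> \<phi> t \<le> t"
  using phi_lt[of t] phi0 by (cases "t = 0") auto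
lemma contr: "d (T x) (T y) \<le> \<phi> (G x y)" using con by (simp add: contractive_def)

lemma G_ge: "d x y \<le> G x y"
  using GG by (auto simp: M1_def M2_def M3_def)

lemma G_le: "G x y \<le> max (max (d x y) (H d T x y)) (L d T x y)"
  using GG by (auto simp: M1_def M2_def M3_def)

lemma Xsuc: "(T ^^ Suc n) x = T ((T ^^ n) x)" by simp

lemma cauchy: "zd_Cauchy d (\<lambda>n. (T ^^ n) x)"
proof (rule ccontr)
  define X where "X = (\<lambda>n. (T ^^ n) x)"
  define a where "a = (\<lambda>n. d (X n) (X (Suc n)))"
  have XS: "X (Suc n) = T (X n)" for n by (simp add: X_def)
  have alim: "a \<longlonglongrightarrow> 0" using asy by (simp add: d_asymptotic_def a_def X_def)
  assume "\<not> zd_Cauchy d (\<lambda>n. (T ^^ n) x)"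
  then obtain e where e: "e > 0" "\<And>j. \<exists>m n. j \<le> m \<and> m < n \<and> d (X m) (X n) \<ge> e"
    unfolding zd_Cauchy_def X_def by (auto simp: not_less)
  obtain Q where Q: "countable Q" "\<forall>s\<in>{0<..} - Q. L_plus \<phi> s < ereal s"
    using nra by (auto simp: nearly_right_admissible_def)
  have "uncountable {0<..e}" using e(1) by (simp add: uncountable_half_open_interval_2)
  then have "{0<..e} - Q \<noteq> {}" using Q(1) by (metis Diff_eq_empty_iff countable_subset)
  then obtain \<epsilon> where "\<epsilon> \<in> {0<..e} - Q" by blast
  then have eps: "0 < \<epsilon>" "\<epsilon> \<le> e" "\<epsilon> \<notin> Q" by auto
  have "L_plus \<phi> \<epsilon> < ereal \<epsilon>" using Q(2) eps by auto
  then have "Limsup (at_right \<epsilon>) (\<lambda>t. ereal (\<phi> t)) < ereal \<epsilon>"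
    by (simp add: L_plus_def)
  then obtain c where c: "Limsup (at_right \<epsilon>) (\<lambda>t. ereal (\<phi> t)) < ereal c" "c < \<epsilon>"
    using ereal_dense2 by force
  have "eventually (\<lambda>t. ereal (\<phi> t) < ereal c) (at_right \<epsilon>)"
    using Limsup_lessD[OF c(1)] .
  then obtain b where b: "b > \<epsilon>" "\<And>t. t > \<epsilon> \<Longrightarrow> t < b \<Longrightarrow> \<phi> t < c"
    unfolding eventually_at_right_field by auto
  define c2 where "c2 = max c (\<phi> \<epsilon>)"
  have c2: "c2 < \<epsilon>" using c(2) phi_lt[OF eps(1)] by (simp add: c2_def)
  have phib: "\<phi> t \<le> c2" if "\<epsilon> \<le> t" "t < b" for t
  proof (cases "t = \<epsilon>")
    case True then show ?thesis by (simp add: c2_def)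
  next
    case False then show ?thesis using b(2)[of t] that by (simp add: c2_def)
  qed
  define \<kappa> where "\<kappa> = \<epsilon> - c2"
  define \<eta> where "\<eta> = min (min (\<kappa>/2) ((b-\<epsilon>)/2)) \<epsilon>"
  have eta: "\<eta> > 0" using c2 b(1) eps(1) by (simp add: \<eta>_def \<kappa>_def)
  have "eventually (\<lambda>n. a n < \<eta>) sequentially"
    using order_tendstoD(2)[OF alim eta] .
  then obtain N where N: "\<And>n. n \<ge> N \<Longrightarrow> a n < \<eta>"
    unfolding eventually_sequentially by auto
  obtain m n0 where mn0: "N \<le> m" "m < n0" "d (X m) (X n0) \<ge> e" using e(2) by blast
  define P where "P = (\<lambda>n. m < n \<and> d (X m) (X n) \<ge> \<epsilon>)"
  have Pn0: "P n0" using mn0 eps by (simp add: P_def)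
  define n where "n = (LEAST n. P n)"
  have Pn: "P n" using LeastI[of P, OF Pn0] by (simp add: n_def)
  have minl: "d (X m) (X k) < \<epsilon>" if "m < k" "k < n" for k
  proof -
    have "\<not> P k" using not_less_Least[of k P] that(2) unfolding n_def by blast
    then show ?thesis using that(1) unfolding P_def by simp
  qed
  have mn: "m < n" "d (X m) (X n) \<ge> \<epsilon>" using Pn by (auto simp: P_def)
  have am: "a m < \<eta>" and an: "a n < \<eta>" using N mn(1) mn0(1) by auto
  have am0: "0 \<le> a m" "0 \<le> a n" by (auto simp: a_def d_nn)
  have "n \<noteq> Suc m"
  proof
    assume "n = Suc m"
    then have "d (X m) (X n) = a m" by (simp add: a_def)
    then show False using mn(2) am eta by (simp add: \<eta>_def)
  qed
  obtain p where p0: "n = Suc p" using mn(1) by (cases n) auto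
  have p: "n = Suc p" "m < p" using p0 mn(1) \<open>n \<noteq> Suc m\<close> by auto
  have ap: "a p < \<eta>" using N mn0(1) p(2) by auto
  have dp: "d (X m) (X p) < \<epsilon>" using minl[of p] p by auto
  define D where "D = d (X m) (X n)"
  have D1: "D < \<epsilon> + \<eta>"
    using d_tri[of "X m" "X n" "X p"] dp ap p(1) by (simp add: D_def a_def)
  have H: "H d T (X m) (X n) = max (a m) (a n)"
    by (simp add: H_def a_def XS)
  have l1: "d (X m) (T (X n)) \<le> D + a n"
    using d_tri[of "X m" "T (X n)" "X n"] by (simp add: D_def a_def XS)
  have l2: "d (T (X m)) (X n) \<le> a m + D"
    using d_tri[of "T (X m)" "X n" "X m"] d_sym[of "T (X m)" "X m"] by (simp add: D_def a_def XS)
  have Lb: "2 * L d T (X m) (X n) \<le> 2*D + (a m + a n)"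
  proof -
    have "d (X m) (T (X n)) + d (T (X m)) (X n) \<le> 2*D + (a m + a n)" using l1 l2 by linarith
    then show ?thesis unfolding L_def by simp
  qed
  have Gup: "G (X m) (X n) < b"
  proof -
    have "2*\<eta> \<le> b-\<epsilon>" "\<eta> \<le> \<epsilon>" by (auto simp: \<eta>_def min_def)
    have "D < b" using D1 \<open>2*\<eta> \<le> b-\<epsilon>\<close> eta b(1) by linarith
    moreover have "H d T (X m) (X n) < b" using H am an \<open>\<eta> \<le> \<epsilon>\<close> b(1) by simp
    moreover have "L d T (X m) (X n) < b" using Lb D1 am an \<open>2*\<eta> \<le> b-\<epsilon>\<close> by linarith
    ultimately have "max (max D (H d T (X m) (X n))) (L d T (X m) (X n)) < b" by simp
    then show ?thesis using G_le[of "X m" "X n"] unfolding D_def by linarith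
  qed
  have Glo: "\<epsilon> \<le> G (X m) (X n)" using G_ge[of "X m" "X n"] mn(2) by linarith
  have ph: "\<phi> (G (X m) (X n)) \<le> c2" using phib Glo Gup by auto
  have "D \<le> a m + d (X (Suc m)) (X n)"
    using d_tri[of "X m" "X n" "X (Suc m)"] by (simp add: D_def a_def)
  also have "d (X (Suc m)) (X n) \<le> d (X (Suc m)) (X (Suc n)) + a n"
    using d_tri[of "X (Suc m)" "X n" "X (Suc n)"] d_sym[of "X (Suc n)" "X n"] by (simp add: a_def)
  also have "d (X (Suc m)) (X (Suc n)) \<le> c2" using contr[of "X m" "X n"] ph by (simp add: XS)
  finally have "D \<le> a m + (c2 + a n)" by simp
  moreover have "\<eta> \<le> \<kappa>/2" by (simp add: \<eta>_def)
  ultimately have "D < \<epsilon>" using am an by (simp add: \<kappa>_def)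
  then show False using mn(2) by (simp add: D_def)
qed

lemma fixlim:
  assumes "zd_converges d (\<lambda>n. (T ^^ n) x) z"
  shows "d z (T z) = 0"
proof (rule ccontr)
  define X where "X = (\<lambda>n. (T ^^ n) x)"
  define a where "a = (\<lambda>n. d (X n) (X (Suc n)))"
  have XS: "X (Suc n) = T (X n)" for n by (simp add: X_def)
  have alim: "a \<longlonglongrightarrow> 0" using asy by (simp add: d_asymptotic_def a_def X_def)
  have zl: "(\<lambda>n. d (X n) z) \<longlonglongrightarrow> 0" using assms by (simp add: zd_converges_def X_def)
  have zl2: "(\<lambda>n. d (X (Suc n)) z) \<longlonglongrightarrow> 0" using LIMSEQ_Suc[OF zl] .
  define s where "s = d z (T z)"
  assume "d z (T z) \<noteq> 0"
  then have s: "s > 0" using d_nn[of z "T z"] by (simp add: s_def)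
  define \<delta> where "\<delta> = (s - \<phi> s)/2"
  have dl: "\<delta> > 0" using phi_lt[OF s] by (simp add: \<delta>_def)
  have ps: "0 \<le> \<phi> s" using phi_nn s by simp
  have "eventually (\<lambda>n. d (X n) z < \<delta> \<and> d (X (Suc n)) z < \<delta> \<and> a n < \<delta>) sequentially"
    using order_tendstoD(2)[OF zl dl] order_tendstoD(2)[OF zl2 dl] order_tendstoD(2)[OF alim dl]
    by (intro eventually_conj) auto
  then obtain n where n: "d (X n) z < \<delta>" "d (X (Suc n)) z < \<delta>" "a n < \<delta>"
    unfolding eventually_sequentially by auto
  have key: "d (X (Suc n)) (T z) \<le> max (d (X n) z) (\<phi> s)"
  proof -
    have dd: "d (X (Suc n)) (T z) \<le> \<phi> (G (X n) z)" using contr[of "X n" z] by (simp add: XS)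
    consider "G = M1 d" | "G = M2 d T" | "G = M3 d T" using GG by auto
    then show ?thesis
    proof cases
      case 1
      then show ?thesis using dd phi_le[of "d (X n) z"] d_nn by (auto simp: M1_def)
    next
      case 2
      have "\<delta> \<le> s/2" using ps by (simp add: \<delta>_def)
      then have "G (X n) z = s" using 2 n dl by (simp add: max_def M2_def M1_def H_def a_def XS s_def)
      then show ?thesis using dd by simp
    next
      case 3
      have dl2: "\<delta> \<le> s/2" using ps by (simp add: \<delta>_def)
      have "d (X n) (T z) \<le> d (X n) z + s" using d_tri[of "X n" "T z" z] by (simp add: s_def)
      moreover have "d (T (X n)) z = d (X (Suc n)) z" by (simp add: XS)
      ultimately have "L d T (X n) z \<le> s" using n dl2 by (simp add: L_def)
      then have "G (X n) z = s" using 3 n dl2 dl by (simp add: max_def M3_def M2_def M1_def H_def a_def XS s_def)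
      then show ?thesis using dd by simp
    qed
  qed
  have "s \<le> d z (X (Suc n)) + d (X (Suc n)) (T z)" using d_tri by (simp add: s_def)
  also have "\<dots> \<le> d (X (Suc n)) z + max (d (X n) z) (\<phi> s)" using key d_sym by simp
  finally have "s \<le> d (X (Suc n)) z + max (d (X n) z) (\<phi> s)" .
  then show False using n(1,2) d_nn[of "X (Suc n)" z] d_nn[of "X n" z] ps
    by (auto simp: \<delta>_def max_def split: if_splits)
qed

lemma uniq:
  assumes "d u (T u) = 0" "d v (T v) = 0"
  shows "d u v = 0"
proof (rule ccontr)
  define t where "t = d u v"
  assume "d u v \<noteq> 0"
  then have t: "t > 0" using d_nn[of u v] by (simp add: t_def)
  have Hz: "H d T u v = 0" using assms by (simp add: H_def)
  have "d u (T v) \<le> t" using d_tri[of u "T v" v] assms by (simp add: t_def)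
  moreover have "d (T u) v \<le> t" using d_tri[of "T u" v u] assms d_sym[of "T u" u] by (simp add: t_def)
  ultimately have Lt: "L d T u v \<le> t" by (simp add: L_def)
  have "G u v = t" using GG Hz Lt t by (auto simp: M1_def M2_def M3_def t_def)
  then have c: "d (T u) (T v) \<le> \<phi> t" using contr[of u v] by simp
  have "t \<le> d u (T u) + d (T u) v" using d_tri by (simp add: t_def)
  also have "d (T u) v \<le> d (T u) (T v) + d (T v) v" using d_tri .
  finally have "t \<le> \<phi> t" using assms c d_sym[of "T v" v] by simp
  then show False using phi_lt[OF t] by simp
qed

lemma main: "global_picard_operator d T"
proof -
  have pp: "picard_point d T x" for x
    using cauchy[of x] comp fixlim
    by (auto simp: picard_point_def zero_complete_def Fix_d_def)
  have "Fix_d T d \<noteq> {}"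
    using pp[of undefined] by (auto simp: picard_point_def zd_convergent_def)
  then show ?thesis using pp uniq
    by (auto simp: global_picard_operator_def picard_operator_def d_singleton_def Fix_d_def)
qed

end

theorem theorem1:
  fixes d :: "'a \<Rightarrow> 'a \<Rightarrow> real" and T :: "'a \<Rightarrow> 'a"
    and G :: "'a \<Rightarrow> 'a \<Rightarrow> real" and \<phi> :: "real \<Rightarrow> real"
  assumes "symmetric_on d" and "triangular d" and "zero_complete d"
    and "d_asymptotic d T"
    and "G \<in> {M1 d, M2 d T, M3 d T}"
    and "nearly_right_admissible \<phi>"
    and "contractive d G \<phi> T"
  shows "global_picard_operator d T"
proof -
  interpret setting d T G \<phi> using assms by (unfold_locales)
  show ?thesis by (rule main)
qed

end
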